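(* Let $A_o,A_i\in\mathbb R^{n_y\times n_x}$, let $B_o,B_i\in\mathbb R^{n_y\times n_y}$ and $C_o,C_i\in\mathbb R^{n_x\times n_x}$ be invertible. The outer inclusion $y\in\{(A_o+B_o\Delta C_o)x:\|\Delta\|\le1\}$ contains the inner inclusion $y\in\{(A_i+B_i\Delta C_i)x:\|\Delta\|\le1\}$ if and only if $$\|\tilde A+\tilde B\Delta\tilde C\|\le 1\quad\text{for all }\Delta\in\mathbb C^{n_y\times n_x}\text{ with }\|\Delta\|\le1,$$ where $\tilde B=B_o^{-1}B_i$, $\tilde A=B_o^{-1}(A_i-A_o)C_o^{-1}$, $\tilde C=C_iC_o^{-1}$.
   Context: $\|\cdot\|$ is the spectral norm. The outer inclusion contains the inner one if every pair $(x,y)\in\mathbb C^{n_x}\times\mathbb C^{n_y}$ satisfying the inner inclusion also satisfies the outer inclusion. *)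

theory Defs
  imports "HOL-Analysis.Analysis"
begin

text \<open>Spectral norm of a complex matrix: operator norm induced by the Euclidean
  norm on complex vectors (norm on complex^'n is the l2 norm).\<close>
definition spec_norm :: "complex^'n^'m \<Rightarrow> real" where
  "spec_norm M = onorm (\<lambda>x. M *v x)"

definition cmat :: "real^'n^'m \<Rightarrow> complex^'n^'m" where
  "cmat M = (\<chi> i j. complex_of_real (M $ i $ j))"

definition in_incl ::
  "real^'nx^'ny \<Rightarrow> real^'ny^'ny \<Rightarrow> real^'nx^'nx \<Rightarrow> complex^'nx \<Rightarrow> complex^'ny \<Rightarrow> bool" where
  "in_incl A B C x y \<longleftrightarrow>
     (\<exists>\<Delta>::complex^'nx^'ny. spec_norm \<Delta> \<le> 1 \<and> y = (cmat A + cmat B ** \<Delta> ** cmat C) *v x)"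

end

theory Submission imports Defs begin

lemma cmat_mult: "cmat (A ** B) = cmat A ** cmat B"
  by (simp add: cmat_def matrix_matrix_mult_def vec_eq_iff)
lemma cmat_add: "cmat (A + B) = cmat A + cmat B"
  by (simp add: cmat_def vec_eq_iff)
lemma cmat_diff: "cmat (A - B) = cmat A - cmat B"
  by (simp add: cmat_def vec_eq_iff)
lemma cmat_one: "cmat (mat 1) = mat 1"
  by (simp add: cmat_def vec_eq_iff mat_def)

lemma inv_facts:
  fixes A :: "'a::semiring_1^'n^'m"
  assumes "invertible A"
  shows "A ** matrix_inv A = mat 1" "matrix_inv A ** A = mat 1"
  using someI_ex[OF assms[unfolded invertible_def]] unfolding matrix_inv_def by auto

lemma matrix_add_rdistrib': "((A::'a::semiring_1^'n^'m) + B) ** C = A ** C + B ** C"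
  by (vector matrix_matrix_mult_def sum.distrib[symmetric] field_simps)

lemma bl_mv: "bounded_linear (\<lambda>x. (M::complex^'n^'m) *v x)"
  by (simp add: linear_conv_bounded_linear)

lemma spec_bound: "norm (M *v x) \<le> spec_norm M * norm x"
  unfolding spec_norm_def using onorm[OF bl_mv] by blast

lemma spec_le1: "(\<And>z. norm (M *v z) \<le> norm z) \<Longrightarrow> spec_norm M \<le> 1"
  unfolding spec_norm_def by (rule onorm_le) simp

lemma norm_sq: "(norm (z::complex^'n))^2 = (\<Sum>j\<in>UNIV. (norm (z$j))^2)"
  unfolding norm_vec_def L2_set_def by (simp add: sum_nonneg)

lemma cs: "norm (\<Sum>j\<in>UNIV. cnj (z$j) * (v::complex^'n)$j) \<le> norm z * norm v"
proof -
  have "norm (\<Sum>j\<in>UNIV. cnj (z$j) * v$j) \<le> (\<Sum>j\<in>UNIV. \<bar>norm (z$j)\<bar> * \<bar>norm (v$j)\<bar>)"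
    by (rule order_trans[OF norm_sum]) (simp add: norm_mult)
  also have "\<dots> \<le> L2_set (\<lambda>j. norm (z$j)) UNIV * L2_set (\<lambda>j. norm (v$j)) UNIV"
    by (rule L2_set_mult_ineq)
  finally show ?thesis by (simp add: norm_vec_def)
qed

lemma norm_scal: "norm (\<chi> i. c * (w::complex^'n)$i) = norm c * norm w"
  unfolding norm_vec_def by (simp add: L2_set_right_distrib norm_mult)

lemma rank1:
  fixes z :: "complex^'n" and w :: "complex^'m"
  assumes "norm w \<le> norm z"
  shows "\<exists>D. spec_norm D \<le> 1 \<and> D *v z = w"
proof -
  define nz where "nz = complex_of_real ((norm z)^2)"
  define D where "D = (\<chi> i j. w$i * cnj (z$j) / nz)"
  have Dv: "D *v v = (\<chi> i. ((\<Sum>j\<in>UNIV. cnj (z$j) * v$j) / nz) * w$i)" for v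
    by (simp add: D_def matrix_vector_mult_def vec_eq_iff sum_distrib_left sum_divide_distrib mult_ac)
  show ?thesis
  proof (cases "z = 0")
    case True
    then have "w = 0" using assms by simp
    then show ?thesis using True by (intro exI[of _ 0]) (auto intro: spec_le1)
  next
    case False
    then have nzp: "norm z > 0" by simp
    have "spec_norm D \<le> 1"
    proof (rule spec_le1)
      fix v
      have "norm (D *v v) = norm (\<Sum>j\<in>UNIV. cnj (z$j) * v$j) / (norm z)^2 * norm w"
        unfolding Dv norm_scal nz_def by (simp add: norm_divide norm_power)
      also have "\<dots> \<le> norm z * norm v / (norm z)^2 * norm z"
        by (intro mult_mono divide_right_mono cs assms) auto
      also have "\<dots> = norm v" using nzp by (simp add: power2_eq_square)
      finally show "norm (D *v v) \<le> norm v" .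
    qed
    moreover have "(\<Sum>j\<in>UNIV. cnj (z$j) * z$j) = nz"
      unfolding nz_def norm_sq by (simp add: complex_norm_square[symmetric] mult.commute del: of_real_power)
    then have "D *v z = w" using nzp unfolding Dv by (auto simp add: vec_eq_iff nz_def)
    ultimately show ?thesis by blast
  qed
qed

theorem lemma1:
  fixes Ao Ai :: "real^'nx^'ny" and Bo Bi :: "real^'ny^'ny" and Co Ci :: "real^'nx^'nx"
  assumes "invertible Bo" "invertible Bi" "invertible Co" "invertible Ci"
  shows "(\<forall>x y. in_incl Ai Bi Ci x y \<longrightarrow> in_incl Ao Bo Co x y) \<longleftrightarrow>
    (\<forall>\<Delta>::complex^'nx^'ny. spec_norm \<Delta> \<le> 1 \<longrightarrow>
       spec_norm (cmat (matrix_inv Bo ** (Ai - Ao) ** matrix_inv Co)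
                  + cmat (matrix_inv Bo ** Bi) ** \<Delta> ** cmat (Ci ** matrix_inv Co)) \<le> 1)"
proof -
  have B1: "cmat Bo ** cmat (matrix_inv Bo) = mat 1" "cmat (matrix_inv Bo) ** cmat Bo = mat 1"
    using inv_facts[OF assms(1)] by (metis cmat_mult cmat_one)+
  have C1: "cmat Co ** cmat (matrix_inv Co) = mat 1" "cmat (matrix_inv Co) ** cmat Co = mat 1"
    using inv_facts[OF assms(3)] by (metis cmat_mult cmat_one)+
  define M where "M = (\<lambda>\<Delta>::complex^'nx^'ny. cmat (matrix_inv Bo ** (Ai - Ao) ** matrix_inv Co)
                  + cmat (matrix_inv Bo ** Bi) ** \<Delta> ** cmat (Ci ** matrix_inv Co))"
  have key: "cmat Bo *v (M \<Delta> *v (cmat Co *v x)) = (cmat Ai + cmat Bi ** \<Delta> ** cmat Ci) *v x - cmat Ao *v x" for \<Delta> x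
  proof -
    have "cmat Bo ** M \<Delta> ** cmat Co = (cmat Bo ** cmat (matrix_inv Bo)) ** (cmat Ai - cmat Ao) ** (cmat (matrix_inv Co) ** cmat Co)
       + (cmat Bo ** cmat (matrix_inv Bo)) ** cmat Bi ** \<Delta> ** cmat Ci ** (cmat (matrix_inv Co) ** cmat Co)"
      unfolding M_def cmat_mult cmat_diff by (simp add: matrix_add_ldistrib matrix_add_rdistrib' matrix_mul_assoc)
    also have "\<dots> = cmat Ai + cmat Bi ** \<Delta> ** cmat Ci - cmat Ao"
      unfolding B1 C1 by (simp add: algebra_simps)
    finally show ?thesis by (simp add: matrix_vector_mul_assoc matrix_mul_assoc matrix_vector_mult_diff_rdistrib)
  qed
  have key2: "M \<Delta> *v z = cmat (matrix_inv Bo) *v ((cmat Ai + cmat Bi ** \<Delta> ** cmat Ci) *v (cmat (matrix_inv Co) *v z) - cmat Ao *v (cmat (matrix_inv Co) *v z))" for \<Delta> z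
  proof -
    have e1: "cmat Co *v (cmat (matrix_inv Co) *v z) = z"
      by (simp add: matrix_vector_mul_assoc C1)
    have e2: "cmat (matrix_inv Bo) *v (cmat Bo *v w) = w" for w
      by (simp add: matrix_vector_mul_assoc B1)
    show ?thesis unfolding key[symmetric] e1 e2 ..
  qed
  have "(\<forall>x y. in_incl Ai Bi Ci x y \<longrightarrow> in_incl Ao Bo Co x y) \<longleftrightarrow> (\<forall>\<Delta>. spec_norm \<Delta> \<le> 1 \<longrightarrow> spec_norm (M \<Delta>) \<le> 1)"
  proof
    assume H: "\<forall>x y. in_incl Ai Bi Ci x y \<longrightarrow> in_incl Ao Bo Co x y"
    show "\<forall>\<Delta>. spec_norm \<Delta> \<le> 1 \<longrightarrow> spec_norm (M \<Delta>) \<le> 1"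
    proof (intro allI impI)
      fix \<Delta> :: "complex^'nx^'ny"
      assume D: "spec_norm \<Delta> \<le> 1"
      show "spec_norm (M \<Delta>) \<le> 1"
      proof (rule spec_le1)
      fix z
      define x where "x = cmat (matrix_inv Co) *v z"
      have "in_incl Ai Bi Ci x ((cmat Ai + cmat Bi ** \<Delta> ** cmat Ci) *v x)"
        unfolding in_incl_def using D by blast
      then obtain D' where D': "spec_norm D' \<le> 1"
        "(cmat Ai + cmat Bi ** \<Delta> ** cmat Ci) *v x = (cmat Ao + cmat Bo ** D' ** cmat Co) *v x"
        using H unfolding in_incl_def by blast
      have "M \<Delta> *v z = cmat (matrix_inv Bo) *v ((cmat Bo ** D' ** cmat Co) *v x)"
        unfolding key2 x_def[symmetric] D'(2) by (simp add: matrix_vector_mult_add_rdistrib)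
      also have "\<dots> = D' *v z"
        unfolding x_def by (simp add: matrix_vector_mul_assoc matrix_mul_assoc B1)
          (simp add: matrix_mul_assoc[symmetric] C1)
      finally have "norm (M \<Delta> *v z) = norm (D' *v z)" by simp
      also have "\<dots> \<le> spec_norm D' * norm z" by (rule spec_bound)
      also have "\<dots> \<le> norm z" using mult_right_mono[OF D'(1) norm_ge_zero, of z] by simp
      finally show "norm (M \<Delta> *v z) \<le> norm z" .
    qed
    qed
  next
    assume H: "\<forall>\<Delta>. spec_norm \<Delta> \<le> 1 \<longrightarrow> spec_norm (M \<Delta>) \<le> 1"
    show "\<forall>x y. in_incl Ai Bi Ci x y \<longrightarrow> in_incl Ao Bo Co x y"
    proof (intro allI impI)
      fix x y
      assume "in_incl Ai Bi Ci x y"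
      then obtain \<Delta> where D: "spec_norm \<Delta> \<le> 1" "y = (cmat Ai + cmat Bi ** \<Delta> ** cmat Ci) *v x"
        unfolding in_incl_def by blast
      define z where "z = cmat Co *v x"
      have "norm (M \<Delta> *v z) \<le> spec_norm (M \<Delta>) * norm z" by (rule spec_bound)
      also have "\<dots> \<le> norm z" using mult_right_mono[OF H[rule_format, OF D(1)] norm_ge_zero, of z] by simp
      finally obtain D' where D': "spec_norm D' \<le> 1" "D' *v z = M \<Delta> *v z" using rank1 by metis
      have "y = cmat Ao *v x + cmat Bo *v (M \<Delta> *v z)"
        unfolding z_def key D(2) by simp
      also have "\<dots> = (cmat Ao + cmat Bo ** D' ** cmat Co) *v x"
      proof -
        have "cmat Bo *v (M \<Delta> *v z) = cmat Bo *v (D' *v (cmat Co *v x))" using D'(2) z_def by simp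
        then show ?thesis by (simp add: matrix_vector_mult_add_rdistrib matrix_vector_mul_assoc matrix_mul_assoc)
      qed
      finally show "in_incl Ao Bo Co x y" unfolding in_incl_def using D' by blast
    qed
  qed
  then show ?thesis by (simp only: M_def)
qed

end
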